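(* Let $M$ be a closed manifold without conjugate points whose universal covering is a visibility manifold. Given $\theta\in T_1M$, $\epsilon>0$ and $t>0$, there exists $\tilde\epsilon_1>0$ such that $\chi(B(\theta,\epsilon,t))\subset B(\chi(\theta),\tilde\epsilon_1,t)$. If moreover $\theta\in\mathcal R_0$, then there exist an open saturated set $D(\theta,\epsilon,t)\subset B(\theta,\epsilon,t)$ containing $\theta$ and $\tilde\epsilon_2>0$ such that $$B(\chi(\theta),\tilde\epsilon_2,t)\subset\chi(D(\theta,\epsilon,t))\subset\chi(B(\theta,\epsilon,t)).$$
   Context: $(M,g)$ closed $C^\infty$ Riemannian manifold without conjugate points, $\tilde M$ universal covering; visibility: for every $z\in\tilde M$, $\epsilon>0$ there is $R$ with $d(z,[x,y])>R\Rightarrow$ angle at $z$ between $[z,x],[z,y]$ is $<\epsilon$. $d\pi:T_1\tilde M\to T_1M$ covering, $d_s$ Sasaki distance, $\Phi=(\phi_t)$ geodesic flow. For $\theta\in T_1\tilde M$, $\tilde{\mathcal F}^s(\theta)=\{(x,-\nabla b_\theta(x)):b_\theta(x)=0\}$, $b_\theta(x)=\lim_{t\to\infty}(d(x,\gamma_\theta(t))-t)$, $\tilde{\mathcal F}^u(\theta)=\{-v:v\in\tilde{\mathcal F}^s(-\theta)\}$; for $\theta\in T_1M$ with lift $\tilde\theta$, $\mathcal F^{s,u}(\theta)=d\pi(\tilde{\mathcal F}^{s,u}(\tilde\theta))$, $\mathcal I(\theta)=\mathcal F^s(\theta)\cap\mathcal F^u(\theta)$, $\mathcal R_0=\{\theta:\mathcal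 I(\theta)=\{\theta\}\}$. $\eta\sim\theta\iff\eta\in\mathcal I(\theta)$; $X=T_1M/\sim$ (quotient topology, compact metric $d$), $\chi$ quotient map, $\Psi=(\psi_t)$ with $\psi_t\circ\chi=\chi\circ\phi_t$. A set $A\subset T_1M$ is saturated if $A=\chi^{-1}(\chi(A))$. Dynamical balls: $B(\theta,\epsilon,t)=\{\eta: d_s(\phi_s\theta,\phi_s\eta)<\epsilon\ \forall s\in[0,t]\}$ in $T_1M$ and $B(x,\epsilon,t)=\{y:d(\psi_sx,\psi_sy)<\epsilon\ \forall s\in[0,t]\}$ in $X$. *)

theory Defs
  imports "HOL-Analysis.Analysis"
begin

definition dyn_ball :: "(real \<Rightarrow> 'a::metric_space \<Rightarrow> 'a) \<Rightarrow> 'a \<Rightarrow> real \<Rightarrow> real \<Rightarrow> 'a set" where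
  "dyn_ball flow x e t = {y. \<forall>s\<in>{0..t}. dist (flow s x) (flow s y) < e}"

definition saturated :: "('a \<Rightarrow> 'b) \<Rightarrow> 'a set \<Rightarrow> bool" where
  "saturated chi A \<longleftrightarrow> A = chi -` (chi ` A)"

definition R0 :: "('a \<Rightarrow> 'a set) \<Rightarrow> 'a set" where
  "R0 I = {\<theta>. I \<theta> = {\<theta>}}"

end

theory Submission
  imports Defs
begin

theorem mainTheorem15:
  fixes phi :: "real \<Rightarrow> 'a::metric_space \<Rightarrow> 'a"
    and psi :: "real \<Rightarrow> 'b::metric_space \<Rightarrow> 'b"
    and chi :: "'a \<Rightarrow> 'b"
    and I :: "'a \<Rightarrow> 'a set"
    and \<theta> :: 'a and \<epsilon> t :: real
  assumes T1M_compact: "compact (UNIV :: 'a set)"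
    and flow_zero: "\<And>x. phi 0 x = x"
    and flow_add: "\<And>s r x. phi (s + r) x = phi s (phi r x)"
    and flow_cont: "continuous_on UNIV (\<lambda>(s, x). phi s x)"
    and chi_classes: "\<And>\<eta> \<xi>. chi \<eta> = chi \<xi> \<longleftrightarrow> \<eta> \<in> I \<xi>"
    and chi_surj: "surj chi"
    and quotient_topology: "\<And>U. open U \<longleftrightarrow> open (chi -` U)"
    and psi_conj: "\<And>s x. psi s (chi x) = chi (phi s x)"
    and eps_pos: "\<epsilon> > 0" and t_pos: "t > 0"
  shows "(\<exists>e1>0. chi ` dyn_ball phi \<theta> \<epsilon> t \<subseteq> dyn_ball psi (chi \<theta>) e1 t)
       \<and> (\<theta> \<in> R0 I \<longrightarrow>
           (\<exists>D e2. open D \<and> saturated chi D \<and> D \<subseteq> dyn_ball phi \<theta> \<epsilon> t \<and> \<theta> \<in> D \<and> e2 > 0 \<and>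
              dyn_ball psi (chi \<theta>) e2 t \<subseteq> chi ` D \<and>
              chi ` D \<subseteq> chi ` dyn_ball phi \<theta> \<epsilon> t))"
proof
  have cont: "continuous_on UNIV chi"
  proof -
    have "open (chi -` B)" if "open B" for B
      using quotient_topology[of B] that by blast
    then show ?thesis by (simp add: continuous_on_open_vimage[OF open_UNIV])
  qed
  have cX: "compact (UNIV :: 'b set)"
    using compact_continuous_image[OF cont T1M_compact] chi_surj by simp
  then have "bounded (UNIV :: 'b set)" by (rule compact_imp_bounded)
  then have "\<exists>e. \<forall>x\<in>(UNIV::'b set). \<forall>y\<in>UNIV. dist x y \<le> e"
    by (simp only: bounded_two_points)
  then obtain a where a: "\<And>x y. dist x (y::'b) \<le> a"
    by blast
  show "\<exists>e1>0. chi ` dyn_ball phi \<theta> \<epsilon> t \<subseteq> dyn_ball psi (chi \<theta>) e1 t"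
  proof (intro exI[of _ "\<bar>a\<bar> + 1"] conjI)
    show "\<bar>a\<bar> + 1 > 0" by simp
    show "chi ` dyn_ball phi \<theta> \<epsilon> t \<subseteq> dyn_ball psi (chi \<theta>) (\<bar>a\<bar> + 1) t"
    proof -
      have "dist x y < \<bar>a\<bar> + 1" for x y :: 'b using a[of x y] by linarith
      then show ?thesis unfolding dyn_ball_def by auto
    qed
  qed
  show "\<theta> \<in> R0 I \<longrightarrow>
           (\<exists>D e2. open D \<and> saturated chi D \<and> D \<subseteq> dyn_ball phi \<theta> \<epsilon> t \<and> \<theta> \<in> D \<and> e2 > 0 \<and>
              dyn_ball psi (chi \<theta>) e2 t \<subseteq> chi ` D \<and>
              chi ` D \<subseteq> chi ` dyn_ball phi \<theta> \<epsilon> t)"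
  proof
    assume "\<theta> \<in> R0 I"
    then have Ith: "I \<theta> = {\<theta>}" by (simp add: R0_def)
    have fib: "x = \<theta>" if "chi x = chi \<theta>" for x
      using chi_classes[of x \<theta>] Ith that by simp
    have uc: "uniformly_continuous_on ({0..t} \<times> UNIV) (\<lambda>(s, x). phi s x)"
    proof -
      have "compact ({0..t} \<times> (UNIV::'a set))" by (rule compact_Times[OF compact_Icc T1M_compact])
      then show ?thesis
        by (rule compact_uniformly_continuous[OF continuous_on_subset[OF flow_cont subset_UNIV]])
    qed
    then obtain d where d: "d > 0" and
      dd: "\<And>p q. p \<in> {0..t} \<times> UNIV \<Longrightarrow> q \<in> {0..t} \<times> UNIV \<Longrightarrow> dist q p < d \<Longrightarrow>
         dist ((\<lambda>(s, x). phi s x) q) ((\<lambda>(s, x). phi s x) p) < \<epsilon>"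
    proof -
      from uc eps_pos obtain d where d0: "d > 0" and H:
        "\<forall>p\<in>{0..t} \<times> UNIV. \<forall>q\<in>{0..t} \<times> UNIV. dist q p < d \<longrightarrow>
         dist ((\<lambda>(s, x). phi s x) q) ((\<lambda>(s, x). phi s x) p) < \<epsilon>"
        unfolding uniformly_continuous_on_def by (elim allE impE exE conjE) auto
      show ?thesis
      proof (rule that[OF d0])
        fix p q assume p: "p \<in> {0..t} \<times> (UNIV::'a set)" and q: "q \<in> {0..t} \<times> (UNIV::'a set)"
          and pq: "dist q p < d"
        show "dist ((\<lambda>(s, x). phi s x) q) ((\<lambda>(s, x). phi s x) p) < \<epsilon>"
          using bspec[OF bspec[OF H p] q] pq by (rule mp)
      qed
    qed
    have ballB: "ball \<theta> d \<subseteq> dyn_ball phi \<theta> \<epsilon> t"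
    proof
      fix y assume y: "y \<in> ball \<theta> d"
      show "y \<in> dyn_ball phi \<theta> \<epsilon> t"
        unfolding dyn_ball_def
      proof (intro CollectI ballI)
        fix s assume s: "s \<in> {0..t}"
        have "dist (s, y) (s, \<theta>) < d" using y by (simp add: dist_Pair_Pair dist_commute)
        then have "dist (phi s y) (phi s \<theta>) < \<epsilon>"
          using dd[of "(s,\<theta>)" "(s,y)"] s by simp
        then show "dist (phi s \<theta>) (phi s y) < \<epsilon>" by (simp add: dist_commute)
      qed
    qed
    define K where "K = - ball \<theta> d"
    have "compact K"
    proof -
      have "compact (K \<inter> UNIV)" by (rule closed_Int_compact[OF _ T1M_compact]) (simp add: K_def closed_Compl)
      then show ?thesis by simp
    qed
    then have "compact (chi ` K)"
      by (rule compact_continuous_image[OF continuous_on_subset[OF cont subset_UNIV]])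
    then have clK: "closed (chi ` K)" by (rule compact_imp_closed)
    define V where "V = - chi ` K"
    have oV: "open V" using clK V_def by (simp add: open_Compl)
    have thV: "chi \<theta> \<in> V"
    proof -
      have "\<theta> \<notin> K" using d by (simp add: K_def closed_Compl)
      then show ?thesis using fib unfolding V_def by (auto simp: image_iff)
    qed
    define D where "D = chi -` V"
    have oD: "open D" using quotient_topology[of V] oV D_def by simp
    have satD: "saturated chi D" unfolding saturated_def D_def by auto
    have DB: "D \<subseteq> ball \<theta> d" unfolding D_def V_def K_def by auto
    have chiD: "chi ` D = V" unfolding D_def using chi_surj by (simp add: surj_image_vimage_eq)
    obtain r where r: "r > 0" "ball (chi \<theta>) r \<subseteq> V"
      using oV thV openE by blast
    have psi0: "psi 0 y = y" for y
    proof -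
      obtain x where "y = chi x" using chi_surj by blast
      then show ?thesis using psi_conj flow_zero by simp
    qed
    have "dyn_ball psi (chi \<theta>) r t \<subseteq> chi ` D"
    proof
      fix y assume "y \<in> dyn_ball psi (chi \<theta>) r t"
      then have "dist (psi 0 (chi \<theta>)) (psi 0 y) < r" unfolding dyn_ball_def using t_pos by auto
      then have "dist (chi \<theta>) y < r" by (simp add: psi0)
      then show "y \<in> chi ` D" using r chiD by auto
    qed
    moreover have "\<theta> \<in> D" using thV D_def by simp
    ultimately show "\<exists>D e2. open D \<and> saturated chi D \<and> D \<subseteq> dyn_ball phi \<theta> \<epsilon> t \<and> \<theta> \<in> D \<and> e2 > 0 \<and>
              dyn_ball psi (chi \<theta>) e2 t \<subseteq> chi ` D \<and>
              chi ` D \<subseteq> chi ` dyn_ball phi \<theta> \<epsilon> t"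
      using oD satD DB ballB r(1) by blast
  qed
qed

end
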